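(* Let $\boldsymbol{m}\in\mathbb{N}^2$ and $\boldsymbol{\gamma}=(\gamma_1,\gamma_2)\in\mathbb{Z}^2$ with $\gamma_1\equiv\gamma_2\pmod 2$. If $\sum_{\boldsymbol{i}\in\mathrm{I}^{(\boldsymbol{m})}}w_{\boldsymbol{i}}\,\chi_{\boldsymbol{\gamma}}(\boldsymbol{i})\neq0$, then there exist $h_1,h_2\in\mathbb{Z}$ with $\gamma_1=2h_1m_1$, $\gamma_2=2h_2m_2$ and $h_1+h_2$ even. Conversely, if such $h_1,h_2$ exist, then $\sum_{\boldsymbol{i}\in\mathrm{I}^{(\boldsymbol{m})}}w_{\boldsymbol{i}}\,\chi_{\boldsymbol{\gamma}}(\boldsymbol{i})=1$.
   Context: $\mathrm{I}^{(\boldsymbol{m})}=\{(i_1,i_2)\in\mathbb{Z}^2:\ 0\le i_1\le m_1,\ -2m_2<i_2\le 2m_2,\ i_2\le0\text{ if }i_1=m_1,\ i_1+i_2\text{ even}\}$. Weights: $w_{\boldsymbol{i}}=\frac{1}{4m_1m_2}$ if $i_1=0$ and $w_{\boldsymbol{i}}=\frac{2}{4m_1m_2}$ if $0<i_1\le m_1$. For $\boldsymbol{\gamma}\in\mathbb{Z}^2$, $\chi_{\boldsymbol{\gamma}}:\mathrm{I}^{(\boldsymbol{m})}\to\mathbb{C}$, $\chi_{\boldsymbol{\gamma}}(\boldsymbol{i})=\cos\!\big(\frac{\gamma_1i_1\pi}{2m_1}\big)e^{\mathrm{i}\gamma_2i_2\pi/(2m_2)}$. *)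

theory Defs
  imports "HOL-Analysis.Analysis"
begin

definition Iset :: "nat \<Rightarrow> nat \<Rightarrow> (int \<times> int) set" where
  "Iset m1 m2 = {(i1, i2). 0 \<le> i1 \<and> i1 \<le> int m1 \<and> - 2 * int m2 < i2 \<and> i2 \<le> 2 * int m2
      \<and> (i1 = int m1 \<longrightarrow> i2 \<le> 0) \<and> even (i1 + i2)}"

definition wt :: "nat \<Rightarrow> nat \<Rightarrow> int \<times> int \<Rightarrow> real" where
  "wt m1 m2 i = (if fst i = 0 then 1 / (4 * real m1 * real m2) else 2 / (4 * real m1 * real m2))"

definition chi :: "nat \<Rightarrow> nat \<Rightarrow> int \<times> int \<Rightarrow> int \<times> int \<Rightarrow> complex" where
  "chi m1 m2 \<gamma> i = complex_of_real (cos (real_of_int (fst \<gamma> * fst i) * pi / (2 * real m1)))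
      * exp (\<i> * complex_of_real (real_of_int (snd \<gamma> * snd i) * pi / (2 * real m2)))"

end

theory Submission
  imports Defs
begin


lemma cis_eq_1_iff: "cis x = 1 \<longleftrightarrow> (\<exists>n::int. x = 2*pi*n)"
  unfolding cis_conv_exp exp_eq_1 by (auto simp: mult.commute mult.left_commute)

lemma geo_root:
  fixes z :: complex
  assumes "z ^ N = 1"
  shows "(\<Sum>k<N. z^k) = (if z = 1 then of_nat N else 0)"
  using assms by (simp add: sum_gp_strict)

lemma oneD:
  fixes m :: nat and g :: int
  assumes m: "m > 0" and ev: "even g"
  defines "c \<equiv> real_of_int g * pi / (2 * real m)"
  shows "(\<Sum>j\<in>{0..m}. (if j = 0 \<or> j = m then 1 else 2) * cos (c * real j))
         = (if (4 * int m) dvd g then 2 * real m else 0)"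
proof -
  let ?f = "\<lambda>j::nat. cos (c * real j)"
  have w: "(if j = 0 \<or> j = m then 1 else 2) * ?f j = (if j < m then ?f j else 0) + (if 1 \<le> j then ?f j else 0)"
    if "j \<in> {0..m}" for j using that m by auto
  have "(\<Sum>j\<in>{0..m}. (if j = 0 \<or> j = m then 1 else 2) * ?f j)
       = (\<Sum>j\<in>{0..m}. if j < m then ?f j else 0) + (\<Sum>j\<in>{0..m}. if 1 \<le> j then ?f j else 0)"
    unfolding sum.distrib[symmetric] by (rule sum.cong) (use w in auto)
  also have "(\<Sum>j\<in>{0..m}. if j < m then ?f j else 0) = (\<Sum>j<m. ?f j)"
    by (simp add: sum.inter_filter[symmetric]; rule sum.cong; auto)
  also have "(\<Sum>j\<in>{0..m}. if 1 \<le> j then ?f j else 0) = (\<Sum>j\<in>{1..m}. ?f j)"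
    by (simp add: sum.inter_filter[symmetric]; rule sum.cong; auto)
  also have "(\<Sum>j\<in>{1..m}. ?f j) = (\<Sum>j\<in>{m..<2*m}. ?f j)"
  proof (rule sum.reindex_bij_witness[of _ "\<lambda>j. 2*m - j" "\<lambda>j. 2*m - j"])
    fix j assume j: "j \<in> {1..m}"
    obtain s where s: "g = 2 * s" using ev by blast
    have eq: "c * real (2*m - j) = 2 * pi * real_of_int s - c * real j"
      using j m by (simp add: c_def s of_nat_diff field_simps)
    show "?f (2*m - j) = ?f j"
    proof -
      have "cos (real_of_int s * (2 * pi)) = 1" by (metis cos_int_2pin mult.commute)
      moreover have "sin (real_of_int s * (2 * pi)) = 0" by (metis sin_int_2pin mult.commute)
      ultimately show ?thesis using eq
        by (simp add: cos_diff mult.commute[of _ "real_of_int s"])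
    qed
  qed auto
  also have "(\<Sum>j<m. ?f j) + (\<Sum>j\<in>{m..<2*m}. ?f j) = (\<Sum>j<2*m. ?f j)"
    by (metis lessThan_atLeast0 mult_2 le_add1 le0 sum.atLeastLessThan_concat)
  also have "(\<Sum>j<2*m. ?f j) = Re (\<Sum>j<2*m. cis c ^ j)"
    unfolding Re_sum by (rule sum.cong[OF refl]) (metis cos_n_Re_cis_pow_n mult.commute)
  also have "cis c ^ (2*m) = 1"
  proof -
    obtain s where s: "g = 2 * s" using ev by blast
    have h: "real (2*m) * c = 2 * pi * real_of_int s" using m by (simp add: c_def s field_simps)
    show ?thesis by (subst Complex.DeMoivre, subst h, rule cis_multiple_2pi) simp
  qed
  hence "(\<Sum>j<2*m. cis c ^ j) = (if cis c = 1 then of_nat (2*m) else 0)"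
    by (rule geo_root)
  also have "cis c = 1 \<longleftrightarrow> (4 * int m) dvd g"
  proof
    assume "cis c = 1"
    then obtain n :: int where "c = 2*pi*n" by (auto simp: cis_eq_1_iff)
    hence "real_of_int g = real_of_int (4 * int m * n)" using m by (simp add: c_def field_simps)
    hence "g = 4 * int m * n" by linarith
    thus "(4 * int m) dvd g" by simp
  next
    assume "(4 * int m) dvd g"
    then obtain n where "g = 4 * int m * n" by blast
    hence "c = 2*pi*n" using m by (simp add: c_def field_simps)
    thus "cis c = 1" by (auto simp: cis_eq_1_iff)
  qed
  finally show ?thesis by simp
qed



definition rr :: "nat \<Rightarrow> int" where "rr j = (if even j then 2 else 1)"
definition KK :: "nat \<Rightarrow> nat \<Rightarrow> nat \<Rightarrow> nat" where "KK m1 m2 j = (if j = m1 then m2 else 2*m2)"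
definition phi :: "nat \<Rightarrow> nat \<times> nat \<Rightarrow> int \<times> int" where
  "phi m2 = (\<lambda>(j,k). (int j, -2*int m2 + rr j + 2*int k))"

lemma Iset_eq: "Iset m1 m2 = phi m2 ` (SIGMA j:{0..m1}. {..<KK m1 m2 j})"
proof
  show "phi m2 ` (SIGMA j:{0..m1}. {..<KK m1 m2 j}) \<subseteq> Iset m1 m2"
    by (auto simp: phi_def Iset_def rr_def KK_def split: if_splits; presburger)
next
  show "Iset m1 m2 \<subseteq> phi m2 ` (SIGMA j:{0..m1}. {..<KK m1 m2 j})"
  proof
    fix x assume x: "x \<in> Iset m1 m2"
    obtain a b where ab: "x = (a,b)" by force
    define j where "j = nat a"
    define k where "k = nat ((b + 2*int m2 - rr j) div 2)"
    have a: "0 \<le> a" "a \<le> int m1" and b: "- 2 * int m2 < b" "b \<le> 2 * int m2"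
      and c: "a = int m1 \<longrightarrow> b \<le> 0" and e: "even (a + b)"
      using x by (auto simp: ab Iset_def)
    have ja: "int j = a" using a by (simp add: j_def)
    have r: "rr j = (if even a then 2 else 1)" by (simp add: rr_def ja[symmetric] even_of_nat)
    have kb: "int k = (b + 2*int m2 - rr j) div 2" using b r e unfolding k_def by (simp split: if_splits; presburger)
    have bk: "b = -2*int m2 + rr j + 2*int k" using kb r e b by (auto split: if_splits; presburger)
    have "k < KK m1 m2 j" using kb r e b c ja a by (auto simp: KK_def split: if_splits; presburger)
    moreover have "j \<in> {0..m1}" using a ja by auto
    ultimately show "x \<in> phi m2 ` (SIGMA j:{0..m1}. {..<KK m1 m2 j})"
      by (intro image_eqI[of _ _ "(j,k)"]) (auto simp: phi_def ab ja bk)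
  qed
qed

lemma phi_inj: "inj_on (phi m2) A"
  by (auto simp: inj_on_def phi_def)



lemma chi_eq: "chi m1 m2 (g1,g2) (a,b) = complex_of_real (cos (real_of_int (g1*a)*pi/(2*real m1))) * cis (real_of_int (g2*b)*pi/(2*real m2))"
  by (simp add: chi_def cis_conv_exp)

lemma row:
  assumes "m2 > 0"
  shows "(\<Sum>k<N. complex_of_real (wt m1 m2 (phi m2 (j,k))) * chi m1 m2 (g1,g2) (phi m2 (j,k)))
   = complex_of_real (wt m1 m2 (int j, 0) * cos (real_of_int (g1*int j)*pi/(2*real m1)))
     * cis (real_of_int g2 * pi/(2*real m2) * real_of_int (rr j - 2*int m2))
     * (\<Sum>k<N. cis (real_of_int g2*pi/real m2)^k)"
proof -
  have t: "complex_of_real (wt m1 m2 (phi m2 (j,k))) * chi m1 m2 (g1,g2) (phi m2 (j,k))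
     = complex_of_real (wt m1 m2 (int j, 0) * cos (real_of_int (g1*int j)*pi/(2*real m1)))
     * cis (real_of_int g2 * pi/(2*real m2) * real_of_int (rr j - 2*int m2))
     * cis (real_of_int g2*pi/real m2)^k" for k
  proof -
    have "cis (real_of_int (g2 * (-2*int m2 + rr j + 2*int k))*pi/(2*real m2))
        = cis (real_of_int g2 * pi/(2*real m2) * real_of_int (rr j - 2*int m2)) * cis (real_of_int g2*pi/real m2)^k"
      unfolding Complex.DeMoivre cis_mult using assms by (simp add: field_simps)
    then show ?thesis by (simp add: phi_def chi_eq wt_def)
  qed
  show ?thesis unfolding t sum_distrib_left by simp
qed



lemma cis_int_pi: "cis (real_of_int n * pi) = complex_of_real (cos (real_of_int n * pi))"
  by (rule complex_eqI) (simp_all add: sin_times_pi_eq_0)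

lemma keyB:
  assumes "m1 > 0" "m2 > 0"
  shows "complex_of_real (cos (real_of_int (g1*int j)*pi/(2*real m1)))
     * cis (real_of_int (2*h2*int m2) * pi/(2*real m2) * real_of_int (rr j - 2*int m2))
   = complex_of_real (cos (real_of_int (g1 + 2*h2*int m1)*pi/(2*real m1) * real j))"
proof -
  have "even (rr j - 2*int m2 - int j)" unfolding rr_def by (cases "even j") auto
  then obtain t where "rr j - 2*int m2 - int j = 2*t" by (rule evenE)
  hence t: "rr j - 2*int m2 = int j + 2*t" by simp
  hence tr: "real_of_int (rr j) = real j + 2*real_of_int t + 2*real m2"
    by (metis (mono_tags, opaque_lifting) add.commute diff_eq_eq of_int_add of_int_mult of_int_numeral of_int_of_nat_eq)
  have eq: "real_of_int (2*h2*int m2) * pi/(2*real m2) * real_of_int (rr j - 2*int m2)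
      = real_of_int (h2 * int j) * pi + 2*pi*real_of_int (h2*t)"
    using assms by (simp add: tr field_simps)
  have c1: "cis (2*pi*real_of_int (h2*t)) = 1" by (rule cis_multiple_2pi) simp
  have "cis (real_of_int (2*h2*int m2) * pi/(2*real m2) * real_of_int (rr j - 2*int m2))
       = cis (real_of_int (h2 * int j) * pi) * cis (2*pi*real_of_int (h2*t))"
    by (simp only: eq cis_mult)
  also have "\<dots> = complex_of_real (cos (real_of_int (h2 * int j) * pi))"
    by (simp only: c1 cis_int_pi mult_1_right)
  finally have "cis (real_of_int (2*h2*int m2) * pi/(2*real m2) * real_of_int (rr j - 2*int m2))
       = complex_of_real (cos (real_of_int (h2 * int j) * pi))" .
  moreover have "sin (real_of_int (h2 * int j) * pi) = 0" by (simp add: sin_times_pi_eq_0)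
  moreover have "real_of_int (g1 + 2*h2*int m1)*pi/(2*real m1) * real j
       = real_of_int (g1*int j)*pi/(2*real m1) + real_of_int (h2 * int j) * pi"
    using assms by (simp add: field_simps)
  ultimately show ?thesis by (simp add: cos_add)
qed



theorem proposition9p2:
  fixes m1 m2 :: nat and \<gamma>1 \<gamma>2 :: int
  assumes "m1 > 0" and "m2 > 0" and "\<gamma>1 mod 2 = \<gamma>2 mod 2"
  shows "((\<Sum>i\<in>Iset m1 m2. complex_of_real (wt m1 m2 i) * chi m1 m2 (\<gamma>1, \<gamma>2) i) \<noteq> 0 \<longrightarrow>
            (\<exists>h1 h2 :: int. \<gamma>1 = 2 * h1 * int m1 \<and> \<gamma>2 = 2 * h2 * int m2 \<and> even (h1 + h2)))
       \<and> ((\<exists>h1 h2 :: int. \<gamma>1 = 2 * h1 * int m1 \<and> \<gamma>2 = 2 * h2 * int m2 \<and> even (h1 + h2)) \<longrightarrow>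
            (\<Sum>i\<in>Iset m1 m2. complex_of_real (wt m1 m2 i) * chi m1 m2 (\<gamma>1, \<gamma>2) i) = 1)"
proof -
  note m1 = assms(1) and m2 = assms(2) and par = assms(3)
  let ?F = "\<lambda>i. complex_of_real (wt m1 m2 i) * chi m1 m2 (\<gamma>1, \<gamma>2) i"
  let ?P = "\<exists>h1 h2 :: int. \<gamma>1 = 2 * h1 * int m1 \<and> \<gamma>2 = 2 * h2 * int m2 \<and> even (h1 + h2)"
  define z where "z = cis (real_of_int \<gamma>2*pi/real m2)"
  have S: "(\<Sum>i\<in>Iset m1 m2. ?F i) = (\<Sum>j\<in>{0..m1}. \<Sum>k<KK m1 m2 j. ?F (phi m2 (j,k)))"
    unfolding Iset_eq sum.reindex[OF phi_inj] by (subst sum.Sigma) (auto simp: comp_def)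
  have R: "(\<Sum>k<KK m1 m2 j. ?F (phi m2 (j,k)))
     = complex_of_real (wt m1 m2 (int j, 0) * cos (real_of_int (\<gamma>1*int j)*pi/(2*real m1)))
     * cis (real_of_int \<gamma>2 * pi/(2*real m2) * real_of_int (rr j - 2*int m2))
     * (\<Sum>k<KK m1 m2 j. z^k)" for j
    unfolding z_def by (rule row[OF m2])
  have main: "(\<Sum>i\<in>Iset m1 m2. ?F i) = (if ?P then 1 else 0)"
  proof (cases "\<exists>h2. \<gamma>2 = 2*h2*int m2")
    case False
    have z1: "z \<noteq> 1"
    proof
      assume "z = 1"
      then obtain n :: int where "real_of_int \<gamma>2*pi/real m2 = 2*pi*n" by (auto simp: z_def cis_eq_1_iff)
      hence "real_of_int \<gamma>2 = real_of_int (2*n*int m2)" using m2 by (simp add: field_simps)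
      hence "\<gamma>2 = 2*n*int m2" by linarith
      thus False using False by blast
    qed
    have row0: "(\<Sum>k<KK m1 m2 j. ?F (phi m2 (j,k))) = 0" if "j \<in> {0..m1}" for j
    proof (cases "j = m1")
      case True
      show ?thesis
      proof (cases "even \<gamma>1")
        case True
        then obtain s0 where s: "\<gamma>2 = 2 * s0" using par by (metis even_iff_mod_2_eq_zero evenE)
        have h: "real m2 * (real_of_int \<gamma>2*pi/real m2) = 2*pi*real_of_int s0" using m2 by (simp add: s field_simps)
        have "z ^ m2 = 1" unfolding z_def by (subst Complex.DeMoivre, subst h, rule cis_multiple_2pi) simp
        hence "(\<Sum>k<m2. z^k) = 0" using z1 by (simp add: geo_root)
        thus ?thesis unfolding R using \<open>j = m1\<close> by (simp add: KK_def)
      next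
        case False
        have "cos (real_of_int (\<gamma>1*int j)*pi/(2*real m1)) = 0"
          unfolding cos_zero_iff_int using False \<open>j = m1\<close> m1 by (auto intro!: exI[of _ \<gamma>1])
        thus ?thesis unfolding R by simp
      qed
    next
      case False
      have h: "real (2*m2) * (real_of_int \<gamma>2*pi/real m2) = 2*pi*real_of_int \<gamma>2" using m2 by (simp add: field_simps)
      have "z ^ (2*m2) = 1" unfolding z_def by (subst Complex.DeMoivre, subst h, rule cis_multiple_2pi) simp
      hence "(\<Sum>k<2*m2. z^k) = 0" using z1 by (simp add: geo_root)
      thus ?thesis unfolding R using False by (simp add: KK_def)
    qed
    have "\<not> ?P" using False by blast
    thus ?thesis using row0 by (simp add: S)
  next
    case True
    then obtain h2 where h2: "\<gamma>2 = 2*h2*int m2" by blast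
    define g where "g = \<gamma>1 + 2*h2*int m1"
    define c where "c = real_of_int g * pi / (2 * real m1)"
    have ev2: "even \<gamma>2" using h2 by simp
    hence ev1: "even \<gamma>1" using par by (metis even_iff_mod_2_eq_zero)
    hence evg: "even g" by (simp add: g_def)
    have z1: "z = 1"
    proof -
      have "real_of_int \<gamma>2*pi/real m2 = 2*pi*real_of_int h2" using m2 by (simp add: h2 field_simps)
      thus ?thesis unfolding z_def by (simp add: cis_multiple_2pi)
    qed
    have rowB: "(\<Sum>k<KK m1 m2 j. ?F (phi m2 (j,k)))
        = complex_of_real ((if j = 0 \<or> j = m1 then 1 else 2) * cos (c * real j) / (2 * real m1))"
      if "j \<in> {0..m1}" for j
    proof -
      have "(\<Sum>k<KK m1 m2 j. ?F (phi m2 (j,k)))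
         = complex_of_real (wt m1 m2 (int j, 0)) * (complex_of_real (cos (real_of_int (\<gamma>1*int j)*pi/(2*real m1)))
          * cis (real_of_int \<gamma>2 * pi/(2*real m2) * real_of_int (rr j - 2*int m2))) * of_nat (KK m1 m2 j)"
        unfolding R z1 by simp
      also have "\<dots> = complex_of_real (wt m1 m2 (int j, 0) * cos (c * real j) * real (KK m1 m2 j))"
        unfolding h2 keyB[OF m1 m2] c_def g_def by simp
      also have "wt m1 m2 (int j, 0) * cos (c * real j) * real (KK m1 m2 j)
          = (wt m1 m2 (int j, 0) * real (KK m1 m2 j)) * cos (c * real j)" by (simp only: mult_ac)
      also have "wt m1 m2 (int j, 0) * real (KK m1 m2 j) = (if j = 0 \<or> j = m1 then 1 else 2) / (2 * real m1)"
        using that m1 m2 by (auto simp: wt_def KK_def field_simps)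
      finally show ?thesis by simp
    qed
    have "(\<Sum>i\<in>Iset m1 m2. ?F i) = complex_of_real ((\<Sum>j\<in>{0..m1}. (if j = 0 \<or> j = m1 then 1 else 2) * cos (c * real j)) / (2 * real m1))"
      by (simp add: S rowB sum_divide_distrib)
    also have "\<dots> = (if (4 * int m1) dvd g then 1 else 0)"
      unfolding c_def oneD[OF m1 evg] using m1 by simp
    also have "(4 * int m1) dvd g \<longleftrightarrow> ?P"
    proof
      assume "(4 * int m1) dvd g"
      then obtain n where n: "g = 4 * int m1 * n" by blast
      have "\<gamma>1 = 2 * (2*n - h2) * int m1" using n by (simp add: g_def algebra_simps)
      thus ?P using h2 by (intro exI[of _ "2*n - h2"] exI[of _ h2]) simp
    next
      assume ?P
      then obtain h1 h2' where a: "\<gamma>1 = 2 * h1 * int m1" "\<gamma>2 = 2 * h2' * int m2" "even (h1 + h2')" by blast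
      have "h2' = h2" using a(2) h2 m2 by simp
      then obtain q where q: "h1 + h2 = 2*q" using a(3) by blast
      have "g = 2 * int m1 * (h1 + h2)" using a(1) by (simp add: g_def algebra_simps)
      hence "g = 4 * int m1 * q" using q by simp
      thus "(4 * int m1) dvd g" by simp
    qed
    finally show ?thesis .
  qed
  show ?thesis using main by simp
qed

end
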